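(* In the setting of the shrinking generator with $SR_1$, $SR_2$ maximal-length LFSRs of coprime lengths $L_1<L_2$, let $C_2(x)\in GF(2)[x]$ be the characteristic polynomial of $SR_2$ and let $\lambda$ be a root of $C_2(x)$ in $GF(2^{L_2})$. Then the primitive polynomial $P(x)$ such that the characteristic polynomial of the shrunken sequence is $P(x)^N$ is $$P(x)=(x+\lambda^{E})(x+\lambda^{2E})(x+\lambda^{4E})\cdots(x+\lambda^{2^{L_2-1}E}),\qquad E=2^0+2^1+\cdots+2^{L_1-1}=2^{L_1}-1.$$ *)

theory Defs
  imports "HOL-Computational_Algebra.Polynomial" "HOL-Library.Z2" "HOL-Library.Infinite_Set"
begin

text \<open>GF(2) is the type bit. Embedding of GF(2) into any ring (prime subfield).\<close>
definition gf2_emb :: "bit \<Rightarrow> 'a::ring_1" where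
  "gf2_emb c = (if c = 0 then 0 else 1)"

definition satisfies_rec :: "bit poly \<Rightarrow> (nat \<Rightarrow> bit) \<Rightarrow> bool" where
  "satisfies_rec C s \<longleftrightarrow> (\<forall>n. (\<Sum>i\<le>degree C. coeff C i * s (n + i)) = 0)"

text \<open>Primitive polynomial over GF(2): irreducible, monic, and the order of x
  modulo P is 2^(deg P) - 1.\<close>
definition primitive_poly :: "bit poly \<Rightarrow> bool" where
  "primitive_poly P \<longleftrightarrow> irreducible P \<and> lead_coeff P = 1 \<and>
     P dvd (monom 1 (2 ^ degree P - 1) - 1) \<and>
     (\<forall>e. 0 < e \<and> e < 2 ^ degree P - 1 \<longrightarrow> \<not> P dvd (monom 1 e - 1))"

text \<open>Characteristic (= minimal) polynomial of a sequence: the monic polynomial of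
  least degree whose recurrence the sequence satisfies.\<close>
definition char_poly_seq :: "(nat \<Rightarrow> bit) \<Rightarrow> bit poly \<Rightarrow> bool" where
  "char_poly_seq s P \<longleftrightarrow> lead_coeff P = 1 \<and> satisfies_rec P s \<and>
     (\<forall>Q. Q \<noteq> 0 \<and> satisfies_rec Q s \<longrightarrow> degree P \<le> degree Q)"

definition shrunken :: "(nat \<Rightarrow> bit) \<Rightarrow> (nat \<Rightarrow> bit) \<Rightarrow> nat \<Rightarrow> bit" where
  "shrunken a b k = b (enumerate {n. a n = 1} k)"

end

theory Submission
  imports Defs "HOL-Computational_Algebra.Computational_Algebra" "HOL-Computational_Algebra.Field_as_Ring" "HOL-Library.FuncSet"
begin



instantiation bit ::
  "{unique_euclidean_ring, normalization_euclidean_semiring, normalization_semidom_multiplicative}"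
begin

definition [simp]: "normalize_bit = (normalize_field :: bit \<Rightarrow> _)"
definition [simp]: "unit_factor_bit = (unit_factor_field :: bit \<Rightarrow> _)"
definition [simp]: "euclidean_size_bit = (euclidean_size_field :: bit \<Rightarrow> _)"
definition [simp]: "division_segment (x :: bit) = 1"

instance
  by standard
    (simp_all add: dvd_field_iff field_split_simps split: if_splits)

end

instantiation bit :: euclidean_ring_gcd
begin

definition gcd_bit :: "bit \<Rightarrow> bit \<Rightarrow> bit" where
  "gcd_bit = Euclidean_Algorithm.gcd"
definition lcm_bit :: "bit \<Rightarrow> bit \<Rightarrow> bit" where
  "lcm_bit = Euclidean_Algorithm.lcm"
definition Gcd_bit :: "bit set \<Rightarrow> bit" where
 "Gcd_bit = Euclidean_Algorithm.Gcd"
definition Lcm_bit :: "bit set \<Rightarrow> bit" where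
 "Lcm_bit = Euclidean_Algorithm.Lcm"

instance by standard (simp_all add: gcd_bit_def lcm_bit_def Gcd_bit_def Lcm_bit_def)

end

instance bit :: field_gcd ..



definition app :: "'a::comm_ring_1 poly \<Rightarrow> (nat \<Rightarrow> 'a) \<Rightarrow> nat \<Rightarrow> 'a" where
  "app Q s n = (\<Sum>i\<le>degree Q. coeff Q i * s (n + i))"

lemma sat_app: "satisfies_rec (Q :: bit poly) s \<longleftrightarrow> (\<forall>n. app Q s n = 0)"
  by (simp add: satisfies_rec_def app_def)

lemma app_bound: assumes "degree Q < N" shows "app Q s n = (\<Sum>i<N. coeff Q i * s (n + i))"
proof -
  have "(\<Sum>i<N. coeff Q i * s (n + i)) = (\<Sum>i\<in>{..degree Q}. coeff Q i * s (n + i))"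
    by (rule sum.mono_neutral_right) (use assms in \<open>auto simp: coeff_eq_0\<close>)
  then show ?thesis by (simp add: app_def)
qed

lemma app_pCons: "app (pCons c Q) s n = c * s n + app Q s (Suc n)"
proof -
  have d: "degree (pCons c Q) < Suc (Suc (degree Q))" using degree_pCons_le[of c Q] by linarith
  have "app (pCons c Q) s n = (\<Sum>i<Suc (Suc (degree Q)). coeff (pCons c Q) i * s (n + i))"
    by (rule app_bound[OF d])
  also have "\<dots> = c * s n + (\<Sum>i<Suc (degree Q). coeff Q i * s (Suc n + i))"
    by (subst sum.lessThan_Suc_shift) simp
  also have "(\<Sum>i<Suc (degree Q). coeff Q i * s (Suc n + i)) = app Q s (Suc n)"
    by (rule app_bound[symmetric]) simp
  finally show ?thesis .
qed

lemma app_0 [simp]: "app 0 s n = 0"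
  by (simp add: app_def)

lemma app_add: "app (Q + R) s n = app Q s n + app R s n"
proof (induction Q arbitrary: R n)
  case (pCons a p)
  obtain b q where R: "R = pCons b q" by (cases R)
  show ?case by (simp add: R app_pCons pCons.IH distrib_right add_ac)
qed simp

lemma app_smult: "app (smult c Q) s n = c * app Q s n"
  by (induction Q arbitrary: n) (simp_all add: app_pCons algebra_simps)

lemma app_mult: "app (Q * R) s n = app Q (app R s) n"
proof (induction Q arbitrary: n)
  case (pCons a p)
  have "app (pCons a p * R) s n = a * app R s n + app (pCons 0 (p * R)) s n"
    by (simp add: app_add app_smult)
  then show ?case using pCons.IH by (simp add: app_pCons)
qed simp

lemma app_const: "app [:c:] s n = c * s n"
  by (simp add: app_pCons)

lemma app_one: "app 1 s n = s n"
  by (simp add: one_pCons app_pCons)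

lemma app_monom: "app (monom 1 d) s n = s (n + d)"
  by (induction d arbitrary: n) (simp_all add: monom_0 monom_Suc app_const app_pCons)

lemma app_zero_seq: "app Q (\<lambda>_. 0) n = 0"
  by (simp add: app_def)

lemma app_pcompose_monom:
  "app (pcompose Q (monom 1 d)) s (r + d * n) = app Q (\<lambda>m. s (r + d * m)) n"
proof (induction Q arbitrary: n)
  case (pCons a p)
  have "app (pcompose (pCons a p) (monom 1 d)) s (r + d * n)
      = a * s (r + d * n) + app (pcompose p (monom 1 d)) s (r + d * n + d)"
    by (simp add: pcompose_pCons app_add app_const app_mult app_monom)
  also have "app (pcompose p (monom 1 d)) s (r + d * n + d) = app p (\<lambda>m. s (r + d * m)) (Suc n)"
    using pCons.IH[of "Suc n"] by (simp add: algebra_simps)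
  finally show ?case by (simp add: app_pCons)
qed (simp add: app_def)

lemma sat_mult: assumes "satisfies_rec R s" shows "satisfies_rec (Q * R) s"
proof -
  have "app R s = (\<lambda>_. 0)" using assms by (auto simp: sat_app)
  then show ?thesis by (simp add: sat_app app_mult app_zero_seq)
qed

lemma sat_dvd: "satisfies_rec R s \<Longrightarrow> R dvd Q \<Longrightarrow> satisfies_rec Q s"
  by (auto simp: dvd_def mult.commute intro: sat_mult)

lemma sat_coprime_cancel:
  assumes "coprime A Q" "satisfies_rec (A * B) s" "satisfies_rec Q s"
  shows "satisfies_rec B s"
proof -
  define u where "u = fst (bezout_coefficients A Q)"
  define v where "v = snd (bezout_coefficients A Q)"
  have "u * A + v * Q = 1"
    using bezout_coefficients_fst_snd[of A Q] assms(1) by (simp add: u_def v_def)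
  then have B: "B = u * (A * B) + (v * B) * Q"
    by (metis (no_types, lifting) distrib_right mult.assoc mult.commute mult_1)
  have z1: "app (A * B) s = (\<lambda>_. 0)" using assms(2) by (auto simp: sat_app)
  have z2: "app Q s = (\<lambda>_. 0)" using assms(3) by (auto simp: sat_app)
  have "app B s n = 0" for n
    by (subst B) (simp only: app_add app_mult z1 z2 app_zero_seq add_0)
  then show ?thesis by (simp add: sat_app)
qed

lemma sat_power_bound:
  assumes "irreducible P"
  shows "Q \<noteq> 0 \<Longrightarrow> satisfies_rec Q s \<Longrightarrow> satisfies_rec (P ^ K) s \<Longrightarrow>
    \<exists>j. satisfies_rec (P ^ j) s \<and> j * degree P \<le> degree Q"
proof (induction K arbitrary: Q s)
  case 0
  then show ?case by (intro exI[of _ 0]) auto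
next
  case (Suc K)
  show ?case
  proof (cases "P dvd Q")
    case True
    then obtain Q' where Q: "Q = P * Q'" by (auto simp: dvd_def)
    have Q0: "Q' \<noteq> 0" "P \<noteq> 0" using Suc.prems Q by auto
    have "satisfies_rec Q' (app P s)" using Suc.prems(2) unfolding Q sat_app
      by (simp add: app_mult mult.commute[of P])
    moreover have "satisfies_rec (P ^ K) (app P s)" using Suc.prems(3) unfolding sat_app power_Suc2 app_mult .
    ultimately obtain j where j: "satisfies_rec (P ^ j) (app P s)" "j * degree P \<le> degree Q'"
      using Suc.IH[OF Q0(1)] by blast
    have "satisfies_rec (P ^ Suc j) s" using j(1) unfolding sat_app
      by (simp add: app_mult mult.commute[of P])
    moreover have "degree Q = degree P + degree Q'" using Q Q0 by (simp add: degree_mult_eq)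
    ultimately show ?thesis using j(2) by (intro exI[of _ "Suc j"]) simp
  next
    case False
    have "coprime P Q"
      using assms False by (simp add: prime_elem_imp_coprime prime_elem_iff_irreducible)
    then have "satisfies_rec (P ^ K) s"
      using sat_coprime_cancel[of P Q "P ^ K" s] Suc.prems by simp
    then show ?thesis using Suc.IH[OF Suc.prems(1,2)] by blast
  qed
qed

lemma char_poly_power:
  assumes "irreducible P" "lead_coeff P = 1" "satisfies_rec (P ^ K) s"
  shows "\<exists>N. char_poly_seq s (P ^ N)"
proof -
  define N where "N = (LEAST N. satisfies_rec (P ^ N) s)"
  have sN: "satisfies_rec (P ^ N) s" unfolding N_def by (rule LeastI[of _ K]) (rule assms(3))
  have "P \<noteq> 0" using assms(1) unfolding irreducible_def by blast
  have "degree (P ^ N) \<le> degree Q" if Q: "Q \<noteq> 0" "satisfies_rec Q s" for Q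
  proof -
    obtain j where j: "satisfies_rec (P ^ j) s" "j * degree P \<le> degree Q"
      using sat_power_bound[OF assms(1) Q assms(3)] by blast
    have "N \<le> j" unfolding N_def by (rule Least_le) (rule j(1))
    then have "N * degree P \<le> j * degree P" by (rule mult_right_mono) simp
    moreover have "degree (P ^ N) = N * degree P" by (rule degree_power_eq) (rule \<open>P \<noteq> 0\<close>)
    ultimately show ?thesis using j(2) by linarith
  qed
  moreover have "lead_coeff (P ^ N) = 1" by (simp only: lead_coeff_power assms(2) power_one)
  ultimately have "char_poly_seq s (P ^ N)" using sN unfolding char_poly_seq_def by blast
  then show ?thesis ..
qed



lemma h0 [simp]: "gf2_emb 0 = 0" by (simp add: gf2_emb_def)
lemma h1 [simp]: "gf2_emb 1 = 1" by (simp add: gf2_emb_def)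

lemma h_add: assumes "(1::'f::comm_ring_1) + 1 = 0"
  shows "(gf2_emb (x + y) :: 'f) = gf2_emb x + gf2_emb y"
proof -
  have b: "(1::bit) + 1 = 0" by simp
  show ?thesis by (cases x; cases y) (simp_all only: b h0 h1 add_0 add_0_right assms)
qed

lemma h_mult: "(gf2_emb (x * y) :: 'f::comm_ring_1) = gf2_emb x * gf2_emb y"
  by (cases x; cases y) simp_all

lemma h_minus: assumes "(1::'f::comm_ring_1) + 1 = 0"
  shows "(gf2_emb (x - y) :: 'f) = gf2_emb x - gf2_emb y"
proof -
  have m: "- (1::'f) = 1" using assms by (metis add_eq_0_iff2)
  have b: "(1::bit) - 1 = 0" "(0::bit) - 1 = 1" "(-1::bit) = 1" "(1::bit) - 0 = 1" "(0::bit) - 0 = 0" by simp_all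
  show ?thesis by (cases x; cases y) (simp_all only: b h0 h1 diff_0_right diff_self m diff_0)
qed

lemma h_sq: "(gf2_emb x :: 'f::comm_ring_1) ^ 2 = gf2_emb x"
  by (cases x) simp_all

lemma coeff_mp: "coeff (map_poly (gf2_emb :: bit \<Rightarrow> 'f::comm_ring_1) p) n = gf2_emb (coeff p n)"
  by (simp add: coeff_map_poly)

lemma mp_add: assumes "(1::'f::comm_ring_1) + 1 = 0"
  shows "map_poly (gf2_emb :: bit \<Rightarrow> 'f) (p + q) = map_poly gf2_emb p + map_poly gf2_emb q"
  by (rule poly_eqI) (simp only: coeff_mp coeff_add h_add[OF assms])

lemma mp_minus: assumes "(1::'f::comm_ring_1) + 1 = 0"
  shows "map_poly (gf2_emb :: bit \<Rightarrow> 'f) (p - q) = map_poly gf2_emb p - map_poly gf2_emb q"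
  by (rule poly_eqI) (simp only: coeff_mp coeff_diff h_minus[OF assms])

lemma mp_pCons: "map_poly (gf2_emb :: bit \<Rightarrow> 'f::comm_ring_1) (pCons c p) = pCons (gf2_emb c) (map_poly gf2_emb p)"
  by (rule poly_eqI) (simp add: coeff_mp coeff_pCons split: nat.splits)

lemma mp_smult: "map_poly (gf2_emb :: bit \<Rightarrow> 'f::comm_ring_1) (smult c p) = smult (gf2_emb c) (map_poly gf2_emb p)"
  by (rule poly_eqI) (simp add: coeff_mp h_mult)

lemma mp_mult: assumes "(1::'f::comm_ring_1) + 1 = 0"
  shows "map_poly (gf2_emb :: bit \<Rightarrow> 'f) (p * q) = map_poly gf2_emb p * map_poly gf2_emb q"
proof (induction p)
  case (pCons a p)
  show ?case
    by (simp only: mult_pCons_left mp_add[OF assms] mp_smult mp_pCons pCons.IH h0)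
qed simp

lemma mp_one: "map_poly (gf2_emb :: bit \<Rightarrow> 'f::comm_ring_1) 1 = 1"
  by simp

lemma mp_power: assumes "(1::'f::comm_ring_1) + 1 = 0"
  shows "map_poly (gf2_emb :: bit \<Rightarrow> 'f) (p ^ n) = (map_poly gf2_emb p) ^ n"
  by (induction n) (simp_all add: mp_mult[OF assms])

lemma mp_monom: "map_poly (gf2_emb :: bit \<Rightarrow> 'f::comm_ring_1) (monom 1 n) = monom 1 n"
  by (simp add: map_poly_monom)

lemma mp_pcompose: assumes "(1::'f::comm_ring_1) + 1 = 0"
  shows "map_poly (gf2_emb :: bit \<Rightarrow> 'f) (pcompose p q) = pcompose (map_poly gf2_emb p) (map_poly gf2_emb q)"
proof (induction p)
  case (pCons a p)
  have "map_poly (gf2_emb :: bit \<Rightarrow> 'f) [:a:] = [:gf2_emb a:]" by (simp add: mp_pCons)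
  then show ?case
    by (simp add: pcompose_pCons mp_add[OF assms] mp_mult[OF assms] mp_pCons pCons.IH)
qed simp

lemma ev_sq: assumes "(1::'f::comm_ring_1) + 1 = 0"
  shows "poly (map_poly (gf2_emb :: bit \<Rightarrow> 'f) p) (z ^ 2) = (poly (map_poly gf2_emb p) z) ^ 2"
proof (induction p)
  case (pCons a p)
  have two: "(2::'f) * w = 0" for w using assms by (metis mult_2 distrib_right mult_1 mult_zero_left)
  have "(gf2_emb a + z * poly (map_poly gf2_emb p) z) ^ 2
      = (gf2_emb a :: 'f) ^ 2 + z ^ 2 * poly (map_poly gf2_emb p) z ^ 2
        + 2 * (gf2_emb a * z * poly (map_poly gf2_emb p) z)"
    by (simp add: power2_eq_square algebra_simps)
  also have "\<dots> = gf2_emb a + z ^ 2 * poly (map_poly gf2_emb p) z ^ 2"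
    by (simp only: two h_sq add_0_right)
  finally show ?case by (simp add: mp_pCons pCons.IH)
qed simp

lemma ev_pow2: assumes "(1::'f::comm_ring_1) + 1 = 0"
  shows "poly (map_poly (gf2_emb :: bit \<Rightarrow> 'f) p) (z ^ (2 ^ i)) = (poly (map_poly gf2_emb p) z) ^ (2 ^ i)"
proof (induction i)
  case (Suc i)
  have e: "w ^ (2 ^ Suc i) = (w ^ (2 ^ i)) ^ 2" for w :: 'f by (simp only: power_Suc2 power_mult)
  show ?case by (simp only: e ev_sq[OF assms] Suc)
qed simp

lemma ev_zero: assumes "(1::'f::field) + 1 = 0" "poly (map_poly (gf2_emb :: bit \<Rightarrow> 'f) p) z = 0"
  shows "poly (map_poly (gf2_emb :: bit \<Rightarrow> 'f) p) (z ^ (2 ^ i)) = 0"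
  using ev_pow2[OF assms(1)] assms(2) by simp

lemma irr_root_dvd:
  assumes "(1::'f::field) + 1 = 0" "irreducible C"
    "poly (map_poly (gf2_emb :: bit \<Rightarrow> 'f) C) z = 0" "poly (map_poly (gf2_emb :: bit \<Rightarrow> 'f) R) z = 0"
  shows "C dvd R"
proof (rule ccontr)
  assume "\<not> C dvd R"
  then have "coprime C R"
    using assms(2) by (simp add: prime_elem_imp_coprime prime_elem_iff_irreducible)
  define u where "u = fst (bezout_coefficients C R)"
  define v where "v = snd (bezout_coefficients C R)"
  have "u * C + v * R = 1"
    using bezout_coefficients_fst_snd[of C R] \<open>coprime C R\<close> by (simp add: u_def v_def)
  then have "poly (map_poly (gf2_emb :: bit \<Rightarrow> 'f) (u * C + v * R)) z = 1" by simp
  then show False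
    using assms(3,4) by (simp add: mp_add[OF assms(1)] mp_mult[OF assms(1)])
qed

lemma root_dvd_iff:
  assumes "(1::'f::field) + 1 = 0" "irreducible C"
    "poly (map_poly (gf2_emb :: bit \<Rightarrow> 'f) C) z = 0"
  shows "C dvd R \<longleftrightarrow> poly (map_poly (gf2_emb :: bit \<Rightarrow> 'f) R) z = 0"
proof
  assume "C dvd R"
  then obtain D where "R = C * D" by (auto simp: dvd_def)
  then show "poly (map_poly gf2_emb R) z = 0" using assms(3) by (simp add: mp_mult[OF assms(1)])
qed (rule irr_root_dvd[OF assms])

lemma ev_xe: assumes "(1::'f::field) + 1 = 0"
  shows "poly (map_poly (gf2_emb :: bit \<Rightarrow> 'f) (monom 1 e - 1)) z = z ^ e - 1"
  by (simp add: mp_minus[OF assms] mp_monom poly_monom)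

lemma primitive_root_order:
  assumes "(1::'f::field) + 1 = 0" "primitive_poly C" "poly (map_poly (gf2_emb :: bit \<Rightarrow> 'f) C) z = 0"
    "degree C \<ge> 1"
  shows "z ^ e = 1 \<longleftrightarrow> (2 ^ degree C - 1) dvd e"
proof -
  define M where "M = (2::nat) ^ degree C - 1"
  have irr: "irreducible C" using assms(2) by (simp add: primitive_poly_def)
  have key: "C dvd (monom 1 k - 1) \<longleftrightarrow> z ^ k = 1" for k
    using root_dvd_iff[OF assms(1) irr assms(3), of "monom 1 k - 1"] by (simp add: ev_xe[OF assms(1)])
  have zM: "z ^ M = 1" using assms(2) key unfolding primitive_poly_def M_def by blast
  have nz: "\<not> z ^ r = 1" if "0 < r" "r < M" for r
    using assms(2) key that unfolding primitive_poly_def M_def by blast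
  have "(2::nat) ^ 1 \<le> 2 ^ degree C" by (rule power_increasing) (use assms(4) in auto)
  then have "M \<ge> 1" unfolding M_def by simp
  have "z ^ e = z ^ (e mod M)"
  proof -
    have "z ^ e = z ^ (M * (e div M) + e mod M)" by simp
    also have "\<dots> = (z ^ M) ^ (e div M) * z ^ (e mod M)" by (simp only: power_add power_mult)
    finally show ?thesis using zM by simp
  qed
  moreover have "e mod M < M" using \<open>M \<ge> 1\<close> by simp
  ultimately have "z ^ e = 1 \<longleftrightarrow> e mod M = 0" using nz by fastforce
  then show ?thesis unfolding M_def[symmetric] by (simp add: mod_eq_0_iff_dvd)
qed

lemma finite_field_pow_card:
  fixes x :: "'f::{field,finite}"
  assumes "x \<noteq> 0"
  shows "x ^ (card (UNIV :: 'f set) - 1) = 1"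
proof -
  have "(\<Prod>y\<in>UNIV-{0}. x * y) = x ^ (card (UNIV :: 'f set) - 1) * \<Prod>(UNIV-{0::'f})"
    by (simp add: prod.distrib card_Diff_singleton)
  also have "(\<Prod>y\<in>UNIV-{0}. x * y) = (\<Prod>y\<in>UNIV-{0::'f}. y)"
    by (rule prod.reindex_bij_witness[of _ "\<lambda>y. y / x" "\<lambda>y. x * y"]) (use assms in auto)
  finally have "1 * \<Prod>(UNIV-{0::'f}) = x ^ (card (UNIV :: 'f set) - 1) * \<Prod>(UNIV-{0::'f})" by simp
  moreover have "\<Prod>(UNIV-{0::'f}) \<noteq> 0" by simp
  ultimately show ?thesis by (metis mult_right_cancel)
qed

lemma char2:
  assumes "card (UNIV :: 'f::{field,finite} set) = 2 ^ L" "L \<ge> 1"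
  shows "(1::'f) + 1 = 0"
proof -
  have "(-1::'f) ^ (2 ^ L - 1) = 1" using finite_field_pow_card[of "-1::'f"] assms(1) by simp
  moreover have "odd ((2::nat) ^ L - 1)" using assms(2) by (simp add: odd_pos)
  ultimately have "(-1::'f) = 1" by simp
  then show ?thesis by (metis add.inverse_inverse add.right_inverse)
qed



lemma app_uminus: "app (- Q) s n = - app Q s n"
  by (induction Q arbitrary: n) (simp_all add: app_pCons)

lemma app_diff: "app (Q - R) s n = app Q s n - app R s n"
  by (simp only: diff_conv_add_uminus app_add app_uminus)

lemma bit_neg: "- (x::bit) = x" by simp

lemma bit_eq_of_sum0: "(S::bit) + t = 0 \<Longrightarrow> t = S"
  by (metis add.commute add_eq_0_iff2 bit_neg)

lemma rec_step:
  assumes "satisfies_rec C x" "lead_coeff C = 1" "degree C = L"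
  shows "x (n + L) = (\<Sum>i<L. coeff C i * x (n + i))"
proof -
  have "(\<Sum>i\<le>degree C. coeff C i * x (n + i)) = 0" using assms(1) unfolding satisfies_rec_def by blast
  then have "(\<Sum>i<Suc L. coeff C i * x (n + i)) = 0" unfolding lessThan_Suc_atMost assms(3) .
  then have "(\<Sum>i<L. coeff C i * x (n + i)) + coeff C L * x (n + L) = 0" by (simp only: sum.lessThan_Suc)
  moreover have "coeff C L = 1" using assms(2,3) by simp
  ultimately show ?thesis using bit_eq_of_sum0 by (metis mult_1)
qed

lemma rec_det:
  assumes "satisfies_rec C x" "satisfies_rec C y" "lead_coeff C = 1" "degree C = L"
    "\<forall>k<L. x (i + k) = y (j + k)"
  shows "x (i + m) = y (j + m)"
proof (induction m rule: less_induct)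
  case (less m)
  show ?case
  proof (cases "m < L")
    case True then show ?thesis using assms(5) by blast
  next
    case False
    define q where "q = m - L"
    have m: "m = q + L" using False q_def by simp
    have "x (i + m) = x ((i + q) + L)" by (simp add: m add.assoc)
    also have "\<dots> = (\<Sum>k<L. coeff C k * x (i + q + k))" by (rule rec_step[OF assms(1,3,4)])
    also have "\<dots> = (\<Sum>k<L. coeff C k * y (j + q + k))"
    proof (rule sum.cong[OF refl])
      fix k assume "k \<in> {..<L}"
      then have "q + k < m" using m by simp
      then have "x (i + (q + k)) = y (j + (q + k))" by (rule less.IH)
      then show "coeff C k * x (i + q + k) = coeff C k * y (j + q + k)" by (simp add: add.assoc)
    qed
    also have "\<dots> = y ((j + q) + L)" by (rule rec_step[OF assms(2,3,4), symmetric])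
    also have "\<dots> = y (j + m)" by (simp add: m add.assoc)
    finally show ?thesis .
  qed
qed

lemma zero_sat: "satisfies_rec C (\<lambda>_. 0)"
  by (simp add: satisfies_rec_def)

lemma sat_one_zero: "satisfies_rec 1 s \<Longrightarrow> s = (\<lambda>_. 0)"
  by (auto simp: sat_app app_one)

lemma primitive_facts:
  assumes "primitive_poly C" "degree C = L"
  shows "L \<ge> 1" "irreducible C" "lead_coeff C = 1" "C dvd (monom 1 (2 ^ L - 1) - 1)"
    "\<And>e. 0 < e \<Longrightarrow> e < 2 ^ L - 1 \<Longrightarrow> coprime C (monom 1 e - 1)"
    "\<And>i. coprime C (monom 1 i)"
proof -
  show irr: "irreducible C" and l: "lead_coeff C = 1" and dv: "C dvd (monom 1 (2 ^ L - 1) - 1)"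
    using assms(1) unfolding primitive_poly_def assms(2)[symmetric] by blast+
  show "L \<ge> 1"
  proof (rule ccontr)
    assume "\<not> L \<ge> 1"
    then have "degree C = 0" using assms(2) by simp
    moreover have "C \<noteq> 0" using irr unfolding irreducible_def by blast
    ultimately have "is_unit C" by (simp add: is_unit_iff_degree)
    then show False using irr irreducible_not_unit by blast
  qed
  then have "(2::nat) ^ 1 \<le> 2 ^ L" by (intro power_increasing) auto
  then have L1: "2 ^ L - 1 \<ge> (1::nat)" by simp
  have pe: "prime_elem C" using irr by (simp add: prime_elem_iff_irreducible)
  show "coprime C (monom 1 e - 1)" if "0 < e" "e < 2 ^ L - 1" for e
  proof -
    have "\<not> C dvd (monom 1 e - 1)" using assms(1) that unfolding primitive_poly_def assms(2) by blast
    then show ?thesis using pe prime_elem_imp_coprime by blast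
  qed
  have nx: "\<not> C dvd monom 1 1"
  proof
    assume cx: "C dvd monom 1 1"
    have "monom 1 (2 ^ L - 1) = monom 1 (2 ^ L - 1 - 1) * (monom (1::bit) 1)"
    proof -
      have "2 ^ L - 1 = (2 ^ L - 1 - 1) + (1::nat)" using L1 by simp
      then show ?thesis by (metis mult_monom mult_1)
    qed
    then have "C dvd monom 1 (2 ^ L - 1)" using cx by (simp only: dvd_mult)
    then have "C dvd monom 1 (2 ^ L - 1) - (monom 1 (2 ^ L - 1) - 1)" using dv by (rule dvd_diff)
    moreover have "monom 1 (2 ^ L - 1) - (monom 1 (2 ^ L - 1) - 1) = (1::bit poly)" by (simp only: diff_diff_eq2 add_diff_cancel_left')
    ultimately have "is_unit C" by simp
    then show False using irr irreducible_not_unit by blast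
  qed
  show "coprime C (monom 1 i)" for i
  proof -
    have "monom (1::bit) i = monom 1 1 ^ i" by (simp add: monom_power)
    moreover have "coprime C (monom 1 1)" using pe nx by (rule prime_elem_imp_coprime)
    ultimately show ?thesis by simp
  qed
qed

lemma mseq_period:
  assumes "primitive_poly C" "degree C = L" "satisfies_rec C a"
  shows "a (n + (2 ^ L - 1)) = a n"
proof -
  have "satisfies_rec (monom 1 (2 ^ L - 1) - 1) a"
    using sat_dvd[OF assms(3) primitive_facts(4)[OF assms(1,2)]] .
  then have "app (monom 1 (2 ^ L - 1) - 1) a n = 0" by (simp add: sat_app)
  then have "a (n + (2 ^ L - 1)) - a n = 0" by (simp only: app_diff app_monom app_one)
  then show ?thesis by (simp only: right_minus_eq)
qed

lemma mseq_nonzero_state: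
  assumes "primitive_poly C" "degree C = L" "satisfies_rec C a" "a \<noteq> (\<lambda>_. 0)"
  shows "\<exists>k<L. a (n + k) \<noteq> 0"
proof (rule ccontr)
  assume "\<not> ?thesis"
  then have hz: "\<forall>k<L. a (n + k) = (\<lambda>_. 0::bit) (0 + k)" by simp
  have z: "a (n + m) = 0" for m
    using rec_det[where x=a and y="\<lambda>_. 0" and i=n and j=0, OF assms(3) zero_sat primitive_facts(3)[OF assms(1,2)] assms(2) hz] by simp
  have "satisfies_rec (monom 1 n * 1) a"
    unfolding sat_app by (simp only: mult_1_right app_monom add.commute[of _ n] z) simp
  then have "satisfies_rec 1 a"
    using sat_coprime_cancel[of "monom 1 n" C 1 a] primitive_facts(6)[OF assms(1,2), of n] assms(3)
    by (simp add: coprime_commute)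
  then show False using sat_one_zero assms(4) by blast
qed

lemma mseq_no_small_period:
  assumes "primitive_poly C" "degree C = L" "satisfies_rec C a" "a \<noteq> (\<lambda>_. 0)"
    "i < j" "j < 2 ^ L - 1" "\<forall>k<L. a (i + k) = a (j + k)"
  shows False
proof -
  define d where "d = j - i"
  have d: "0 < d" "d < 2 ^ L - 1" using assms(5,6) by (auto simp: d_def)
  have eq: "a (i + m) = a (i + d + m)" for m
    using rec_det[OF assms(3) assms(3) primitive_facts(3)[OF assms(1,2)] assms(2) assms(7)]
    using assms(5) by (simp add: d_def)
  have "app ((monom 1 d - 1) * monom 1 i) a m = 0" for m
  proof -
    have "app ((monom 1 d - 1) * monom 1 i) a m = a (m + d + i) - a (m + i)"
      by (simp only: app_mult app_diff app_monom app_one)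
    also have "\<dots> = 0"
    proof -
      have "m + d + i = i + d + m" "m + i = i + m" by simp_all
      then show ?thesis by (simp only: eq[of m, symmetric] diff_self)
    qed
    finally show ?thesis .
  qed
  then have "satisfies_rec (((monom 1 d - 1) * monom 1 i) * 1) a" by (simp add: sat_app)
  moreover have "coprime ((monom 1 d - 1) * monom 1 i) C"
    using primitive_facts(5,6)[OF assms(1,2)] d by (simp add: coprime_commute)
  ultimately have "satisfies_rec 1 a" using sat_coprime_cancel assms(3) by blast
  then show False using sat_one_zero assms(4) by blast
qed



lemma UNIV_bit: "(UNIV :: bit set) = {0, 1}" by (auto intro: bit.exhaust)

lemma fin_bit: "finite (UNIV :: bit set)" by (simp only: UNIV_bit finite.intros)

lemma card_bit: "card (UNIV :: bit set) = 2"
proof -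
  have "card {0::bit, 1} = 2" by simp
  then show ?thesis by (simp only: UNIV_bit)
qed

lemma mseq_count:
  assumes "primitive_poly C" "degree C = L" "satisfies_rec C a" "a \<noteq> (\<lambda>_. 0)"
  shows "card {n. n < 2 ^ L - 1 \<and> a n = 1} = 2 ^ (L - 1)"
proof -
  define E where "E = (2::nat) ^ L - 1"
  have L1: "L \<ge> 1" using primitive_facts(1)[OF assms(1,2)] .
  define st where "st n = (\<lambda>k\<in>{..<L}. a (n + k))" for n
  define PE where "PE = PiE {..<L} (\<lambda>_. UNIV :: bit set)"
  define z0 where "z0 = (\<lambda>k\<in>{..<L}. (0::bit))"
  have stPE: "st n \<in> PE" for n by (simp add: st_def PE_def)
  have z0PE: "z0 \<in> PE" by (simp add: z0_def PE_def)
  have stz: "st n \<noteq> z0" for n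
  proof
    assume "st n = z0"
    have "a (n + k) = 0" if "k < L" for k
    proof -
      have "st n k = z0 k" using \<open>st n = z0\<close> by (rule fun_cong)
      then show ?thesis using that unfolding st_def z0_def by simp
    qed
    then have "\<forall>k<L. a (n + k) = 0" by blast
    then show False using mseq_nonzero_state[OF assms] by blast
  qed
  have inj: "inj_on st {..<E}"
  proof (rule inj_onI)
    fix i j assume ij: "i \<in> {..<E}" "j \<in> {..<E}" "st i = st j"
    have "a (i + k) = a (j + k)" if "k < L" for k
    proof -
      have "st i k = st j k" using ij(3) by (rule fun_cong)
      then show ?thesis using that unfolding st_def by simp
    qed
    then have eq: "\<forall>k<L. a (i + k) = a (j + k)" by blast
    show "i = j"
    proof (rule ccontr)
      assume "i \<noteq> j"
      then consider "i < j" | "j < i" by linarith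
      then show False
      proof cases
        case 1 then show False using mseq_no_small_period[OF assms 1] ij eq by (simp add: E_def)
      next
        case 2 then show False using mseq_no_small_period[OF assms 2] ij eq by (simp add: E_def)
      qed
    qed
  qed
  have cPE: "card PE = 2 ^ L" by (simp add: PE_def card_PiE card_bit)
  have fPE: "finite PE" unfolding PE_def by (intro finite_PiE) (auto simp: fin_bit)
  have img: "st ` {..<E} = PE - {z0}"
  proof (rule card_subset_eq)
    show "finite (PE - {z0})" using fPE by simp
    show "st ` {..<E} \<subseteq> PE - {z0}" using stPE stz by auto
    show "card (st ` {..<E}) = card (PE - {z0})"
      using card_image[OF inj] cPE z0PE fPE by (simp add: E_def)
  qed
  have st0: "st n 0 = a n" for n using L1 unfolding st_def by simp
  have "card {n. n < E \<and> a n = 1} = card (st ` {n. n < E \<and> a n = 1})"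
    by (rule card_image[symmetric]) (rule inj_on_subset[OF inj], blast)
  also have "st ` {n. n < E \<and> a n = 1} = {f \<in> PE - {z0}. f 0 = 1}"
  proof -
    have "st ` {n. n < E \<and> a n = 1} = {f \<in> st ` {..<E}. f 0 = 1}"
    proof
      show "st ` {n. n < E \<and> a n = 1} \<subseteq> {f \<in> st ` {..<E}. f 0 = 1}"
      proof
        fix f assume "f \<in> st ` {n. n < E \<and> a n = 1}"
        then obtain n where n: "n < E" "a n = 1" "f = st n" by auto
        then have "f \<in> st ` {..<E}" by blast
        moreover have "f 0 = 1" using n st0[of n] by simp
        ultimately show "f \<in> {f \<in> st ` {..<E}. f 0 = 1}" by blast
      qed
      show "{f \<in> st ` {..<E}. f 0 = 1} \<subseteq> st ` {n. n < E \<and> a n = 1}"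
      proof
        fix f assume "f \<in> {f \<in> st ` {..<E}. f 0 = 1}"
        then have "f 0 = 1" "f \<in> st ` {..<E}" by simp_all
        then obtain n where n: "n < E" "f = st n" by blast
        then have "a n = 1" using st0[of n] \<open>f 0 = 1\<close> by simp
        then show "f \<in> st ` {n. n < E \<and> a n = 1}" using n by blast
      qed
    qed
    then show ?thesis by (simp only: img)
  qed
  also have "{f \<in> PE - {z0}. f 0 = 1} = PiE {..<L} (\<lambda>k. if k = 0 then {1} else UNIV)"
  proof -
    have "z0 0 = 0" using L1 by (simp add: z0_def)
    then have "{f \<in> PE - {z0}. f 0 = 1} = {f \<in> PE. f 0 = 1}"
      by (metis (mono_tags, lifting) DiffD1 DiffI singletonD zero_neq_one)
    also have "\<dots> = PiE {..<L} (\<lambda>k. if k = 0 then {1} else UNIV)"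
    proof (rule set_eqI)
      fix f :: "nat \<Rightarrow> bit"
      have z: "0 \<in> {..<L}" using L1 by simp
      have "(\<forall>i\<in>{..<L}. f i \<in> (if i = 0 then {1} else UNIV)) \<longleftrightarrow> f 0 = 1"
      proof
        assume "\<forall>i\<in>{..<L}. f i \<in> (if i = 0 then {1} else UNIV)"
        then have "f 0 \<in> (if (0::nat) = 0 then {1} else UNIV)" using z by (rule bspec)
        then have "f 0 \<in> {1}" by (simp only: if_True refl)
        then show "f 0 = 1" by blast
      next
        assume "f 0 = 1"
        then show "\<forall>i\<in>{..<L}. f i \<in> (if i = 0 then {1} else UNIV)" by simp
      qed
      then show "f \<in> {f \<in> PE. f 0 = 1} \<longleftrightarrow> f \<in> PiE {..<L} (\<lambda>k. if k = 0 then {1} else UNIV)"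
        unfolding PE_def PiE_iff by blast
    qed
    finally show ?thesis .
  qed
  also have "card \<dots> = (\<Prod>k<L. card (if k = 0 then {1::bit} else UNIV))"
    by (simp add: card_PiE)
  also have "\<dots> = 2 ^ (L - 1)"
  proof -
    obtain L' where L': "L = Suc L'" using L1 by (cases L) auto
    show ?thesis unfolding L' prod.lessThan_Suc_shift by (simp add: card_bit)
  qed
  finally show ?thesis by (simp add: E_def)
qed

lemma enum_card:
  assumes "infinite (S :: nat set)"
  shows "card {m \<in> S. m < enumerate S n} = n"
proof -
  have "{m \<in> S. m < enumerate S n} = enumerate S ` {..<n}"
  proof
    show "{m \<in> S. m < enumerate S n} \<subseteq> enumerate S ` {..<n}"
    proof
      fix m assume m: "m \<in> {m \<in> S. m < enumerate S n}"
      then obtain j where j: "enumerate S j = m" using enumerate_Ex[OF assms] by blast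
      then have "j < n" using m assms by auto
      then show "m \<in> enumerate S ` {..<n}" using j by auto
    qed
    show "enumerate S ` {..<n} \<subseteq> {m \<in> S. m < enumerate S n}"
      using assms enumerate_in_set enumerate_mono by auto
  qed
  moreover have "inj_on (enumerate S) {..<n}"
    using inj_enumerate[OF assms] by (simp add: inj_on_def)
  ultimately show ?thesis by (simp add: card_image)
qed

lemma enum_shift:
  assumes "infinite (S :: nat set)" "\<And>n. n \<in> S \<longleftrightarrow> n + E \<in> S" "card {m \<in> S. m < E} = K"
  shows "enumerate S (k + K) = enumerate S k + E"
proof -
  define q where "q = enumerate S k + E"
  have "q \<in> S" using assms(2) enumerate_in_set[OF assms(1)] by (simp add: q_def)
  then obtain j where j: "enumerate S j = q" using enumerate_Ex[OF assms(1)] by blast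
  have "{m \<in> S. m < q} = {m \<in> S. m < E} \<union> (\<lambda>m. m + E) ` {m \<in> S. m < enumerate S k}"
  proof (rule set_eqI)
    fix m
    show "m \<in> {m \<in> S. m < q} \<longleftrightarrow> m \<in> {m \<in> S. m < E} \<union> (\<lambda>m. m + E) ` {m \<in> S. m < enumerate S k}"
    proof (cases "m < E")
      case True then show ?thesis by (auto simp: q_def)
    next
      case False
      then have m: "m = (m - E) + E" by simp
      have "m \<in> S \<longleftrightarrow> m - E \<in> S" using assms(2)[of "m - E"] m by simp
      then show ?thesis using False m by (auto simp: q_def image_iff intro!: bexI[of _ "m - E"])
    qed
  qed
  moreover have "finite {m \<in> S. m < E}" by simp
  moreover have "finite ((\<lambda>m. m + E) ` {m \<in> S. m < enumerate S k})" by simp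
  moreover have "{m \<in> S. m < E} \<inter> (\<lambda>m. m + E) ` {m \<in> S. m < enumerate S k} = {}" by auto
  ultimately have "card {m \<in> S. m < q} = K + card ((\<lambda>m. m + E) ` {m \<in> S. m < enumerate S k})"
    using assms(3) by (simp add: card_Un_disjoint)
  also have "card ((\<lambda>m. m + E) ` {m \<in> S. m < enumerate S k}) = k"
    by (subst card_image) (auto simp: inj_on_def enum_card[OF assms(1)])
  finally have "card {m \<in> S. m < q} = K + k" .
  moreover have "card {m \<in> S. m < q} = j" using enum_card[OF assms(1), of j] j by simp
  ultimately have "j = k + K" by simp
  then show ?thesis using j q_def by simp
qed

lemma enum_shift_iter:
  assumes "infinite (S :: nat set)" "\<And>n. n \<in> S \<longleftrightarrow> n + E \<in> S" "card {m \<in> S. m < E} = K"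
  shows "enumerate S (k + K * m) = enumerate S k + E * m"
proof (induction m)
  case (Suc m)
  have "enumerate S (k + K * Suc m) = enumerate S ((k + K * m) + K)" by (simp add: algebra_simps)
  also have "\<dots> = enumerate S (k + K * m) + E" by (rule enum_shift[OF assms])
  finally show ?case using Suc by simp
qed simp



lemma mers_step:
  assumes "b \<le> a"
  shows "gcd (2 ^ a - 1 :: nat) (2 ^ b - 1) = gcd (2 ^ (a - b) - 1) (2 ^ b - 1)"
proof -
  obtain x where x: "2 ^ (a - b) = Suc x" using not0_implies_Suc[of "2 ^ (a - b) :: nat"] by auto
  obtain y where y: "2 ^ b = Suc y" using not0_implies_Suc[of "2 ^ b :: nat"] by auto
  have "(2::nat) ^ a = 2 ^ (a - b) * 2 ^ b" using assms by (simp add: power_add[symmetric])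
  then have "(2::nat) ^ a - 1 = (2 ^ (a - b) - 1) + (2 ^ (a - b)) * (2 ^ b - 1)"
    using x y by simp
  then show ?thesis
    by (metis gcd_add_mult gcd.commute add.commute)
qed

lemma mers_gcd: "gcd (2 ^ a - 1 :: nat) (2 ^ b - 1) = 2 ^ (gcd a b) - 1"
proof (induction "a + b" arbitrary: a b rule: less_induct)
  case less
  show ?case
  proof (cases "a = 0 \<or> b = 0")
    case True then show ?thesis by auto
  next
    case False
    show ?thesis
    proof (cases "b \<le> a")
      case True
      have "gcd (2 ^ a - 1 :: nat) (2 ^ b - 1) = gcd (2 ^ (a - b) - 1) (2 ^ b - 1)" by (rule mers_step[OF True])
      also have "\<dots> = 2 ^ (gcd (a - b) b) - 1" using less.hyps[of "a - b" b] False by simp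
      also have "gcd (a - b) b = gcd a b" using True by (rule gcd_diff1_nat)
      finally show ?thesis .
    next
      case b: False
      have "gcd (2 ^ a - 1 :: nat) (2 ^ b - 1) = gcd (2 ^ (b - a) - 1) (2 ^ a - 1)"
        using mers_step[of a b] b by (simp add: gcd.commute)
      also have "\<dots> = 2 ^ (gcd (b - a) a) - 1" using less.hyps[of "b - a" a] False b by simp
      also have "gcd (b - a) a = gcd a b"
      proof -
        have "a \<le> b" using b by simp
        then have "gcd (b - a) a = gcd b a" by (rule gcd_diff1_nat)
        then show ?thesis by (simp only: gcd.commute)
      qed
      finally show ?thesis .
    qed
  qed
qed

lemma coprime_mersenne:
  assumes "coprime m n"
  shows "coprime (2 ^ m - 1 :: nat) (2 ^ n - 1)"
  using mers_gcd[of m n] assms by (simp add: coprime_iff_gcd_eq_1)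

lemma prod_roots_dvd:
  fixes p :: "'f::field poly"
  assumes "finite I" "inj_on g I" "p \<noteq> 0" "\<forall>i\<in>I. poly p (g i) = 0"
  shows "(\<Prod>i\<in>I. [:-(g i), 1:]) dvd p"
  using assms
proof (induction I arbitrary: p rule: finite_induct)
  case empty then show ?case by simp
next
  case (insert i I)
  have "poly p (g i) = 0" using insert.prems by simp
  then obtain q where p: "p = [:-(g i), 1:] * q" by (auto simp: poly_eq_0_iff_dvd dvd_def)
  have q0: "q \<noteq> 0" using p insert.prems(2) by auto
  have "\<forall>j\<in>I. poly q (g j) = 0"
  proof
    fix j assume j: "j \<in> I"
    then have "g j \<noteq> g i" using insert.prems(1) insert.hyps(2) by (auto simp: inj_on_def)
    moreover have "poly p (g j) = 0" using insert.prems(3) j by simp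
    ultimately show "poly q (g j) = 0" using p by simp
  qed
  then have "(\<Prod>i\<in>I. [:-(g i), 1:]) dvd q"
    using insert.IH[OF _ q0] insert.prems(1) by (auto simp: inj_on_def)
  moreover have "(\<Prod>i\<in>insert i I. [:-(g i), 1:]) = [:-(g i), 1:] * (\<Prod>i\<in>I. [:-(g i), 1:])"
    by (rule prod.insert[OF insert.hyps])
  ultimately show ?case unfolding p by (simp only: mult_dvd_mono[OF dvd_refl])
qed

lemma ev_sum:
  assumes "degree Q \<le> N"
  shows "poly (map_poly (gf2_emb :: bit \<Rightarrow> 'f::comm_ring_1) Q) z = (\<Sum>i\<le>N. gf2_emb (coeff Q i) * z ^ i)"
proof -
  have d: "degree (map_poly (gf2_emb :: bit \<Rightarrow> 'f) Q) \<le> N"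
    by (rule order.trans[OF map_poly_degree_leq assms])
  have "poly (map_poly (gf2_emb :: bit \<Rightarrow> 'f) Q) z
     = (\<Sum>i\<le>degree (map_poly (gf2_emb :: bit \<Rightarrow> 'f) Q). coeff (map_poly gf2_emb Q) i * z ^ i)"
    by (rule poly_altdef)
  also have "\<dots> = (\<Sum>i\<le>N. coeff (map_poly (gf2_emb :: bit \<Rightarrow> 'f) Q) i * z ^ i)"
    by (rule sum.mono_neutral_left) (use d in \<open>auto simp: coeff_eq_0\<close>)
  finally show ?thesis by (simp add: coeff_mp)
qed

lemma pigeon_poly:
  fixes z :: "'f::{field,finite}"
  assumes char: "(1::'f) + 1 = 0" and card: "card (UNIV :: 'f set) = 2 ^ L"
  shows "\<exists>R::bit poly. R \<noteq> 0 \<and> degree R \<le> L \<and> poly (map_poly gf2_emb R) z = 0"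
proof -
  define A where "A = PiE {..L} (\<lambda>_. UNIV :: bit set)"
  define \<phi> where "\<phi> c = (\<Sum>i\<le>L. (gf2_emb (c i) :: 'f) * z ^ i)" for c :: "nat \<Rightarrow> bit"
  have cA: "card A = 2 ^ Suc L" by (simp add: A_def card_PiE card_bit)
  have "\<not> inj_on \<phi> A"
  proof
    assume "inj_on \<phi> A"
    then have "card (\<phi> ` A) = 2 ^ Suc L" using cA by (simp add: card_image)
    moreover have "card (\<phi> ` A) \<le> card (UNIV :: 'f set)" by (rule card_mono) auto
    ultimately show False using card by simp
  qed
  then obtain c d where cd: "c \<in> A" "d \<in> A" "c \<noteq> d" "\<phi> c = \<phi> d" unfolding inj_on_def by blast
  obtain i0 where i0: "i0 \<le> L" "c i0 \<noteq> d i0"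
    using cd(1-3) PiE_ext[of c "{..L}" "\<lambda>_. UNIV" d] unfolding A_def by auto
  define R where "R = (\<Sum>i\<le>L. monom (c i - d i) i)"
  have cR: "coeff R k = (if k \<le> L then c k - d k else 0)" for k
    unfolding R_def coeff_sum coeff_monom by (simp add: sum.delta)
  have "coeff R i0 \<noteq> 0" using i0 by (simp only: cR if_True eq_iff_diff_eq_0[symmetric] not_False_eq_True)
  then have R0: "R \<noteq> 0" by auto
  have dR: "degree R \<le> L" by (rule degree_le) (simp add: cR)
  have "poly (map_poly gf2_emb R) z = (\<Sum>i\<le>L. (gf2_emb (coeff R i) :: 'f) * z ^ i)"
    by (rule ev_sum[OF dR])
  also have "\<dots> = (\<Sum>i\<le>L. (gf2_emb (c i) - gf2_emb (d i)) * z ^ i)"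
  proof (rule sum.cong[OF refl])
    fix i assume "i \<in> {..L}"
    then have "coeff R i = c i - d i" using cR[of i] by simp
    then show "(gf2_emb (coeff R i) :: 'f) * z ^ i = (gf2_emb (c i) - gf2_emb (d i)) * z ^ i"
      by (simp only: h_minus[OF char])
  qed
  also have "\<dots> = \<phi> c - \<phi> d" by (simp add: \<phi>_def sum_subtractf left_diff_distrib)
  also have "\<dots> = 0" using cd(4) by simp
  finally show ?thesis using R0 dR by blast
qed

lemma irr_factor:
  fixes z :: "'f::field"
  assumes char: "(1::'f) + 1 = 0"
  shows "R \<noteq> 0 \<Longrightarrow> poly (map_poly gf2_emb R) z = 0 \<Longrightarrow>
    \<exists>P. irreducible P \<and> P dvd R \<and> poly (map_poly gf2_emb P) z = 0"
proof (induction "degree R" arbitrary: R rule: less_induct)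
  case less
  have nu: "\<not> is_unit R"
  proof
    assume "is_unit R"
    then obtain S where "1 = R * S" by (auto simp: dvd_def)
    then have "map_poly (gf2_emb :: bit \<Rightarrow> 'f) 1 = map_poly gf2_emb R * map_poly gf2_emb S"
      using mp_mult[OF char, of R S] by simp
    then have "poly (map_poly (gf2_emb :: bit \<Rightarrow> 'f) R) z * poly (map_poly gf2_emb S) z = 1"
      by (metis mp_one poly_1 poly_mult)
    then show False using less.prems(2) by simp
  qed
  obtain b where b: "b dvd R" "prime b" using prime_divisor_exists[OF less.prems(1) nu] by blast
  then obtain c where R: "R = b * c" by (auto simp: dvd_def)
  have irrb: "irreducible b" using b(2) by (simp add: prime_elem_imp_irreducible)
  have b0: "b \<noteq> 0" and c0: "c \<noteq> 0" using R less.prems(1) by auto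
  have "poly (map_poly (gf2_emb :: bit \<Rightarrow> 'f) b) z * poly (map_poly gf2_emb c) z = 0"
    using less.prems(2) unfolding R by (simp add: mp_mult[OF char])
  then consider "poly (map_poly (gf2_emb :: bit \<Rightarrow> 'f) b) z = 0" | "poly (map_poly (gf2_emb :: bit \<Rightarrow> 'f) c) z = 0"
    by auto
  then show ?case
  proof cases
    case 1 then show ?thesis using irrb b(1) by blast
  next
    case 2
    have "\<not> is_unit b" using irrb irreducible_not_unit by blast
    then have "degree b \<ge> 1" using b0 is_unit_iff_degree by fastforce
    then have "degree c < degree R" using R b0 c0 by (simp add: degree_mult_eq)
    then obtain P where "irreducible P" "P dvd c" "poly (map_poly gf2_emb P) z = 0"
      using less.hyps[OF _ c0 2] by blast
    then show ?thesis using R by (meson dvd_mult_left dvd_trans dvd_triv_right)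
  qed
qed



lemma bit_two_poly: "(2::bit poly) = 0"
  by (simp add: numeral_poly)

lemma bit_sq: "(c::bit) * c = c" by (cases c) simp_all

lemma pcompose_monom1: "pcompose (monom 1 k) q = q ^ k"
  by (induction k) (simp_all add: monom_0 monom_Suc pcompose_pCons)

lemma sq_sum_gen: "((a::'a::comm_ring_1) + b) ^ 2 = a * a + b * b + 2 * (a * b)"
  by (simp add: power2_eq_square algebra_simps)

lemma bit_sq_pcompose: "(Q::bit poly) ^ 2 = pcompose Q (monom 1 2)"
proof (induction Q)
  case (pCons c Q)
  have pc: "pCons c Q = [:c:] + monom 1 1 * Q"
    by (simp add: monom_Suc monom_0)
  have "(pCons c Q) ^ 2 = [:c:] * [:c:] + (monom 1 1 * Q) * (monom 1 1 * Q) + 2 * ([:c:] * (monom 1 1 * Q))"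
    unfolding pc by (rule sq_sum_gen)
  also have "[:c:] * [:c:] = [:c:]" by (simp add: bit_sq)
  also have "(monom 1 1 * Q) * (monom 1 1 * Q) = (monom 1 1 * monom 1 1) * (Q * Q)"
    by (simp only: ac_simps)
  also have "monom 1 1 * monom 1 1 = (monom 1 2 :: bit poly)" by (simp only: mult_monom one_add_one mult_1)
  also have "Q * Q = Q ^ 2" by (simp only: power2_eq_square)
  also have "2 * ([:c:] * (monom 1 1 * Q)) = 0" by (simp only: bit_two_poly mult_zero_left)
  also have "[:c:] + monom 1 2 * Q ^ 2 + 0 = pcompose (pCons c Q) (monom 1 2)"
    by (simp only: pcompose_pCons pCons.IH add_0_right)
  finally show ?case .
qed simp

lemma monom11: "monom (1::'a::comm_ring_1) 1 = [:0, 1:]"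
  by (simp add: monom_Suc monom_0)

lemma bit_pow2_pcompose: "(Q::bit poly) ^ (2 ^ t) = pcompose Q (monom 1 (2 ^ t))"
proof (induction t)
  case 0
  show ?case by (simp only: power_0 power_one_right monom11 pcompose_idR)
next
  case (Suc t)
  have "Q ^ (2 ^ Suc t) = (Q ^ (2 ^ t)) ^ 2" by (simp only: power_Suc2 power_mult)
  also have "\<dots> = pcompose (pcompose Q (monom 1 (2 ^ t))) (monom 1 2)"
    by (simp only: bit_sq_pcompose Suc.IH)
  also have "\<dots> = pcompose Q (pcompose (monom 1 (2 ^ t)) (monom 1 2))"
    by (simp only: pcompose_assoc)
  also have "pcompose (monom 1 (2 ^ t)) (monom (1::bit) 2) = monom 1 (2 ^ Suc t)"
    by (simp only: pcompose_monom1 monom_power power_one power_Suc)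
  finally show ?case by this
qed

lemma neg_char2: assumes "(1::'f::comm_ring_1) + 1 = 0" shows "- (x::'f) = x"
proof -
  have "x + x = (1 + 1) * x" by (simp only: distrib_right mult_1)
  also have "\<dots> = 0" by (simp only: assms mult_zero_left)
  finally show ?thesis by (rule minus_unique)
qed

lemma exists_P:
  fixes lam :: "'f::{field,finite}"
  assumes char: "(1::'f) + 1 = 0" and card: "card (UNIV :: 'f set) = 2 ^ L2"
    and prim: "primitive_poly C2" and deg: "degree C2 = L2"
    and root: "poly (map_poly gf2_emb C2) lam = 0" and cop: "coprime E (2 ^ L2 - 1)"
  shows "\<exists>P. primitive_poly P \<and> map_poly gf2_emb P = (\<Prod>i<L2. [:lam ^ (2 ^ i * E), 1:])
           \<and> C2 dvd pcompose P (monom 1 E)"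
proof -
  define \<mu> where "\<mu> = lam ^ E"
  define M where "M = (2::nat) ^ L2 - 1"
  have L2: "L2 \<ge> 1" using primitive_facts(1)[OF prim deg] .
  have "(2::nat) ^ 1 \<le> 2 ^ L2" by (rule power_increasing) (use L2 in auto)
  then have M1: "M \<ge> 1" unfolding M_def by simp
  have ordl: "lam ^ e = 1 \<longleftrightarrow> M dvd e" for e
    using primitive_root_order[OF char prim root] L2 deg by (simp add: M_def)
  have copM: "coprime M E" using cop by (simp add: M_def coprime_commute)
  have ordm: "\<mu> ^ e = 1 \<longleftrightarrow> M dvd e" for e
  proof -
    have "\<mu> ^ e = lam ^ (E * e)" by (simp add: \<mu>_def power_mult)
    then show ?thesis using ordl[of "E * e"] coprime_dvd_mult_right_iff[OF copM] by simp
  qed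
  have mu0: "\<mu> \<noteq> 0"
  proof
    assume "\<mu> = 0"
    then have "\<mu> ^ M = 0" using M1 by simp
    moreover have "\<mu> ^ M = 1" using ordm[of M] by simp
    ultimately show False by simp
  qed
  have Modd: "odd M" using L2 unfolding M_def by (simp add: odd_pos)
  have inj_aux: False if ij: "i < j" "j < L2" "\<mu> ^ (2 ^ i) = \<mu> ^ (2 ^ j)" for i j
  proof -
    define d where "d = (2::nat) ^ j - 2 ^ i"
    have "(2::nat) ^ i \<le> 2 ^ j" using ij by simp
    then have "\<mu> ^ (2 ^ j) = \<mu> ^ (2 ^ i) * \<mu> ^ d" by (simp add: d_def power_add[symmetric])
    then have "\<mu> ^ (2 ^ i) * \<mu> ^ d = \<mu> ^ (2 ^ i) * 1" using ij(3) by simp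
    moreover have "\<mu> ^ (2 ^ i) \<noteq> 0" using mu0 by simp
    ultimately have "\<mu> ^ d = 1" using mult_left_cancel by blast
    then have "M dvd d" using ordm by blast
    moreover have "d = 2 ^ i * (2 ^ (j - i) - 1)"
    proof -
      have "(2::nat) ^ j = 2 ^ i * 2 ^ (j - i)" using ij by (simp add: power_add[symmetric])
      then show ?thesis by (simp add: d_def diff_mult_distrib2)
    qed
    moreover have "coprime M (2 ^ i)" using Modd by simp
    ultimately have dv: "M dvd 2 ^ (j - i) - 1" by (simp add: coprime_dvd_mult_right_iff)
    have "(2::nat) ^ 1 \<le> 2 ^ (j - i)" by (rule power_increasing) (use ij in auto)
    then have pos: "0 < (2::nat) ^ (j - i) - 1" by simp
    have "(2::nat) ^ (j - i) < 2 ^ L2" using ij by (intro power_strict_increasing) auto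
    then have "(2::nat) ^ (j - i) - 1 < M" unfolding M_def using pos by linarith
    then show False using dvd_imp_le[OF dv pos] by simp
  qed
  have inj: "inj_on (\<lambda>i. \<mu> ^ (2 ^ i)) {..<L2}"
  proof (rule inj_onI)
    fix i j assume "i \<in> {..<L2}" "j \<in> {..<L2}" "\<mu> ^ (2 ^ i) = \<mu> ^ (2 ^ j)"
    then show "i = j" using inj_aux[of i j] inj_aux[of j i] by (metis lessThan_iff linorder_neqE_nat)
  qed
  obtain R where R: "R \<noteq> 0" "degree R \<le> L2" "poly (map_poly gf2_emb R) \<mu> = 0"
    using pigeon_poly[OF char card] by blast
  obtain P where P: "irreducible P" "P dvd R" "poly (map_poly gf2_emb P) \<mu> = 0"
    using irr_factor[OF char R(1) R(3)] by blast
  have P0: "P \<noteq> 0" using P(1) unfolding irreducible_def by blast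
  have "lead_coeff P \<noteq> 0" using P0 by simp
  then have lP: "lead_coeff P = 1" by (simp only: bit_not_zero_iff)
  have dmP: "degree (map_poly (gf2_emb :: bit \<Rightarrow> 'f) P) = degree P"
    by (rule map_poly_degree_eq) (simp add: lP)
  have dP: "degree P \<le> L2" using dvd_imp_degree_le[OF P(2) R(1)] R(2) by linarith
  have lmP: "lead_coeff (map_poly (gf2_emb :: bit \<Rightarrow> 'f) P) = 1"
    by (simp add: dmP coeff_mp lP)
  have mP0: "map_poly (gf2_emb :: bit \<Rightarrow> 'f) P \<noteq> 0" using lmP by auto
  define Dm where "Dm = (\<Prod>i\<in>{..<L2}. [:-(\<mu> ^ (2 ^ i)), 1:])"
  have Ddvd: "Dm dvd map_poly gf2_emb P"
    unfolding Dm_def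
    by (rule prod_roots_dvd[OF _ inj mP0]) (use ev_zero[OF char P(3)] in blast)+
  have dD: "degree Dm = L2" unfolding Dm_def
    by (subst degree_prod_eq_sum_degree) auto
  have lD: "lead_coeff Dm = 1" unfolding Dm_def by (simp add: lead_coeff_prod)
  obtain c where c: "map_poly gf2_emb P = Dm * c" using Ddvd by (auto simp: dvd_def)
  have c0: "c \<noteq> 0" "Dm \<noteq> 0" using c mP0 by auto
  have "degree (map_poly (gf2_emb :: bit \<Rightarrow> 'f) P) = L2 + degree c"
    using c c0 dD by (simp add: degree_mult_eq)
  then have dc: "degree c = 0" and dPL: "degree P = L2" using dmP dP by linarith+
  have "lead_coeff c = 1" using lmP lD c by (simp add: lead_coeff_mult)
  then have "c = 1" using dc by (metis coeff_pCons_0 degree_eq_zeroE one_pCons)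
  then have mPD: "map_poly gf2_emb P = Dm" using c by simp
  have "Dm = (\<Prod>i<L2. [:lam ^ (2 ^ i * E), 1:])"
    unfolding Dm_def
  proof (rule prod.cong[OF refl])
    fix i
    have "\<mu> ^ (2 ^ i) = lam ^ (2 ^ i * E)" by (simp add: \<mu>_def power_mult[symmetric] mult.commute)
    then show "[:-(\<mu> ^ (2 ^ i)), 1:] = [:lam ^ (2 ^ i * E), 1:]" by (simp add: neg_char2[OF char])
  qed
  then have mapP: "map_poly gf2_emb P = (\<Prod>i<L2. [:lam ^ (2 ^ i * E), 1:])" using mPD by simp
  have key: "P dvd (monom 1 e - 1) \<longleftrightarrow> \<mu> ^ e = 1" for e
    using root_dvd_iff[OF char P(1) P(3), of "monom 1 e - 1"] by (simp add: ev_xe[OF char])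
  have primP: "primitive_poly P"
    unfolding primitive_poly_def
  proof (intro conjI allI impI)
    show "irreducible P" by (rule P(1))
    show "lead_coeff P = 1" by (rule lP)
    show "P dvd monom 1 (2 ^ degree P - 1) - 1" using key ordm by (simp add: dPL M_def)
    fix e :: nat assume e: "0 < e \<and> e < 2 ^ degree P - 1"
    show "\<not> P dvd monom 1 e - 1"
    proof
      assume "P dvd monom 1 e - 1"
      then have "M dvd e" using key ordm by blast
      then show False using e dvd_imp_le[of M e] by (simp add: dPL M_def)
    qed
  qed
  have "poly (map_poly (gf2_emb :: bit \<Rightarrow> 'f) (pcompose P (monom 1 E))) lam = 0"
    using P(3) by (simp add: mp_pcompose[OF char] poly_pcompose mp_monom poly_monom \<mu>_def)
  then have "C2 dvd pcompose P (monom 1 E)"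
    using irr_root_dvd[OF char primitive_facts(2)[OF prim deg] root] by blast
  then show ?thesis using primP mapP by blast
qed



theorem lemma2:
  fixes L1 L2 :: nat
    and C1 C2 :: "bit poly"
    and a b :: "nat \<Rightarrow> bit"
    and lam :: "'f::{field,finite}"
  assumes "L1 < L2" and "coprime L1 L2"
    and "primitive_poly C1" and "degree C1 = L1" and "satisfies_rec C1 a" and "a \<noteq> (\<lambda>_. 0)"
    and "primitive_poly C2" and "degree C2 = L2" and "satisfies_rec C2 b" and "b \<noteq> (\<lambda>_. 0)"
    and "card (UNIV :: 'f set) = 2 ^ L2"
    and "poly (map_poly gf2_emb C2) lam = 0"
  shows "\<exists>P N. primitive_poly P \<and> char_poly_seq (shrunken a b) (P ^ N) \<and>
           map_poly gf2_emb P = (\<Prod>i<L2. [:lam ^ (2 ^ i * (2 ^ L1 - 1)), 1:])"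
proof -
  define E where "E = (2::nat) ^ L1 - 1"
  define K where "K = (2::nat) ^ (L1 - 1)"
  define S where "S = {n. a n = 1}"
  define s where "s = shrunken a b"
  have L1: "L1 \<ge> 1" using primitive_facts(1)[OF assms(3,4)] .
  have L2: "L2 \<ge> 1" using assms(1) by simp
  have char: "(1::'f) + 1 = 0" using char2[OF assms(11) L2] .
  have cop: "coprime E (2 ^ L2 - 1)" unfolding E_def by (rule coprime_mersenne[OF assms(2)])
  obtain P where P: "primitive_poly P" "map_poly gf2_emb P = (\<Prod>i<L2. [:lam ^ (2 ^ i * E), 1:])"
      "C2 dvd pcompose P (monom 1 E)"
    using exists_P[OF char assms(11) assms(7) assms(8) assms(12) cop] by blast
  have "(2::nat) ^ 1 \<le> 2 ^ L1" by (rule power_increasing) (use L1 in auto)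
  then have E1: "E \<ge> 1" unfolding E_def by simp
  have per: "a (n + E) = a n" for n unfolding E_def by (rule mseq_period[OF assms(3,4,5)])
  have Sper: "n \<in> S \<longleftrightarrow> n + E \<in> S" for n unfolding S_def using per[of n] by simp
  have cnt: "card {m \<in> S. m < E} = K"
  proof -
    have "{m \<in> S. m < E} = {n. n < 2 ^ L1 - 1 \<and> a n = 1}" unfolding S_def E_def by blast
    then show ?thesis using mseq_count[OF assms(3,4,5,6)] unfolding K_def by simp
  qed
  have "K \<ge> 1" unfolding K_def by simp
  then have "{m \<in> S. m < E} \<noteq> {}" using cnt by (metis card.empty not_one_le_zero)
  then obtain n0 where n0: "n0 \<in> S" by blast
  have n0m: "n0 + E * m \<in> S" for m
  proof (induction m)
    case (Suc m)
    then show ?case using Sper[of "n0 + E * m"] by (simp add: algebra_simps)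
  qed (simp add: n0)
  have infS: "infinite S"
  proof (rule infinite_nat_iff_unbounded_le[THEN iffD2], intro allI)
    fix m
    have "m \<le> n0 + E * m" using E1 by (metis le_add2 mult_le_mono1 mult_1 order_trans)
    then show "\<exists>n\<ge>m. n \<in> S" using n0m by blast
  qed
  have sk: "s (k + K * m) = b (enumerate S k + E * m)" for k m
    unfolding s_def shrunken_def S_def[symmetric] enum_shift_iter[OF infS Sper cnt] ..
  have satb: "satisfies_rec (pcompose P (monom 1 E)) b" by (rule sat_dvd[OF assms(9) P(3)])
  have "app (P ^ K) s k = 0" for k
  proof -
    have "P ^ K = pcompose P (monom 1 K)" unfolding K_def by (rule bit_pow2_pcompose)
    then have "app (P ^ K) s k = app (pcompose P (monom 1 K)) s (k + K * 0)" by simp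
    also have "\<dots> = app P (\<lambda>m. s (k + K * m)) 0" by (rule app_pcompose_monom)
    also have "\<dots> = app P (\<lambda>m. b (enumerate S k + E * m)) 0" by (simp only: sk)
    also have "\<dots> = app (pcompose P (monom 1 E)) b (enumerate S k + E * 0)"
      by (rule app_pcompose_monom[symmetric])
    also have "\<dots> = 0" using satb by (simp only: sat_app)
    finally show ?thesis .
  qed
  then have "satisfies_rec (P ^ K) s" by (simp add: sat_app)
  then obtain N where "char_poly_seq s (P ^ N)"
    using char_poly_power[OF primitive_facts(2,3)[OF P(1) refl]] by blast
  then show ?thesis using P(1,2) unfolding s_def E_def by blast
qed


end
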